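(* Let $\mathbb{M}^3$ be either the Euclidean space $\mathbb{R}^3$ or the round unit sphere $\mathbb{S}^3$. Then every complete end of revolution in $\mathbb{M}^3$ is a parabolic end.
   Context: Let $\mathbb{M}^3(\kappa)$ denote the simply connected $3$-dimensional space form of constant sectional curvature $\kappa$. A complete end of revolution in $\mathbb{M}^3(\kappa)$ is defined as follows: take a geodesic $\sigma$ of $\mathbb{M}^3(\kappa)$, a totally geodesic surface $\mathbb{M}^2(\kappa)\subset\mathbb{M}^3(\kappa)$ containing $\sigma$, and a smooth regular curve $\beta:[0,\infty)\to\mathbb{M}^2(\kappa)$ of infinite length which does not intersect $\sigma$ (so $\beta$ lies in one open half of $\mathbb{M}^2(\kappa)\setminus\sigma$). The end is $E=\{R_\theta(\beta(t)) : t\ge 0,\ \theta\in[0,2\pi)\}$, where $\{R_\theta\}$ is the group (isomorphic to $SO(2)$) of orientation-preserving isometries of $\mathbb{M}^3(\kappa)$ fixing $\sigma$ pointwise; it is the image of the immersion $(t,\theta)\mapsto R_\theta(\beta(t))$ of $[0,\infty)\times\mathbb{S}^1$ and carries the induced Riemannian metric. An end $E$ (a surface with compact boundary) is parabolic if every bounded harmonic function on $E$ is determined by its boundary values. *)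

theory Defs
  imports "HOL-Analysis.Analysis"
begin

text \<open>Rotation by angle th in the 2-plane spanned by the orthonormal vectors f1, f2,
  around the centre p (fixing pointwise the affine subspace through p orthogonal to f1, f2).\<close>
definition rot :: "'a::real_inner \<Rightarrow> 'a \<Rightarrow> 'a \<Rightarrow> real \<Rightarrow> 'a \<Rightarrow> 'a" where
  "rot p f1 f2 th x =
     (let a = (x - p) \<bullet> f1; b = (x - p) \<bullet> f2
      in x + ((cos th - 1) * a - sin th * b) *\<^sub>R f1 + (sin th * a + (cos th - 1) * b) *\<^sub>R f2)"

text \<open>The immersion (t, th) maps to R_th (beta t) of [0,inf) x S^1 (th taken 2pi-periodically).\<close>
definition end_imm :: "'a::real_inner \<Rightarrow> 'a \<Rightarrow> 'a \<Rightarrow> (real \<Rightarrow> 'a) \<Rightarrow> real \<times> real \<Rightarrow> 'a" where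
  "end_imm p f1 f2 beta = (\<lambda>(t, th). rot p f1 f2 th (beta t))"

definition smooth_curve :: "(real \<Rightarrow> 'a::real_normed_vector) \<Rightarrow> bool" where
  "smooth_curve beta \<longleftrightarrow>
     (\<exists>D. D 0 = beta \<and> (\<forall>k. \<forall>t\<ge>0. (D k has_vector_derivative D (Suc k) t) (at t within {0..})))"

definition regular_curve :: "(real \<Rightarrow> 'a::real_normed_vector) \<Rightarrow> bool" where
  "regular_curve beta \<longleftrightarrow> (\<forall>t\<ge>0. vector_derivative beta (at t within {0..}) \<noteq> 0)"

definition infinite_length :: "(real \<Rightarrow> 'a::real_normed_vector) \<Rightarrow> bool" where
  "infinite_length beta \<longleftrightarrow>
     filterlim (\<lambda>T. integral {0..T} (\<lambda>t. norm (vector_derivative beta (at t within {0..}))))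
       at_top at_top"

definition Xt :: "(real \<times> real \<Rightarrow> 'a::real_normed_vector) \<Rightarrow> real \<times> real \<Rightarrow> 'a" where
  "Xt X q = vector_derivative (\<lambda>s. X (s, snd q)) (at (fst q))"

definition Xth :: "(real \<times> real \<Rightarrow> 'a::real_normed_vector) \<Rightarrow> real \<times> real \<Rightarrow> 'a" where
  "Xth X q = vector_derivative (\<lambda>s. X (fst q, s)) (at (snd q))"

definition g11 :: "(real \<times> real \<Rightarrow> 'a::real_inner) \<Rightarrow> real \<times> real \<Rightarrow> real" where
  "g11 X q = Xt X q \<bullet> Xt X q"
definition g12 :: "(real \<times> real \<Rightarrow> 'a::real_inner) \<Rightarrow> real \<times> real \<Rightarrow> real" where
  "g12 X q = Xt X q \<bullet> Xth X q"
definition g22 :: "(real \<times> real \<Rightarrow> 'a::real_inner) \<Rightarrow> real \<times> real \<Rightarrow> real" where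
  "g22 X q = Xth X q \<bullet> Xth X q"
definition gdet :: "(real \<times> real \<Rightarrow> 'a::real_inner) \<Rightarrow> real \<times> real \<Rightarrow> real" where
  "gdet X q = g11 X q * g22 X q - (g12 X q)\<^sup>2"

definition d1 :: "(real \<times> real \<Rightarrow> real) \<Rightarrow> real \<times> real \<Rightarrow> real" where
  "d1 u q = deriv (\<lambda>s. u (s, snd q)) (fst q)"
definition d2 :: "(real \<times> real \<Rightarrow> real) \<Rightarrow> real \<times> real \<Rightarrow> real" where
  "d2 u q = deriv (\<lambda>s. u (fst q, s)) (snd q)"

text \<open>Laplace-Beltrami operator of the induced metric, in divergence form:
  (1/sqrt G) * sum_i d_i (sqrt G * g^ij * d_j u).\<close>
definition flux1 :: "(real \<times> real \<Rightarrow> 'a::real_inner) \<Rightarrow> (real \<times> real \<Rightarrow> real) \<Rightarrow> real \<times> real \<Rightarrow> real" where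
  "flux1 X u q = (g22 X q * d1 u q - g12 X q * d2 u q) / sqrt (gdet X q)"
definition flux2 :: "(real \<times> real \<Rightarrow> 'a::real_inner) \<Rightarrow> (real \<times> real \<Rightarrow> real) \<Rightarrow> real \<times> real \<Rightarrow> real" where
  "flux2 X u q = (g11 X q * d2 u q - g12 X q * d1 u q) / sqrt (gdet X q)"
definition laplace_beltrami :: "(real \<times> real \<Rightarrow> 'a::real_inner) \<Rightarrow> (real \<times> real \<Rightarrow> real) \<Rightarrow> real \<times> real \<Rightarrow> real" where
  "laplace_beltrami X u q = (d1 (flux1 X u) q + d2 (flux2 X u) q) / sqrt (gdet X q)"

definition C2_on :: "(real \<times> real) set \<Rightarrow> (real \<times> real \<Rightarrow> real) \<Rightarrow> bool" where
  "C2_on S u \<longleftrightarrow> u differentiable_on S \<and> d1 u differentiable_on S \<and> d2 u differentiable_on S \<and>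
     continuous_on S (d1 (d1 u)) \<and> continuous_on S (d2 (d1 u)) \<and>
     continuous_on S (d1 (d2 u)) \<and> continuous_on S (d2 (d2 u))"

definition harmonic_end :: "(real \<times> real \<Rightarrow> 'a::real_inner) \<Rightarrow> (real \<times> real \<Rightarrow> real) \<Rightarrow> bool" where
  "harmonic_end X u \<longleftrightarrow> C2_on ({0<..} \<times> UNIV) u \<and>
     (\<forall>q \<in> {0<..} \<times> UNIV. laplace_beltrami X u q = 0)"

text \<open>Bounded harmonic function on the end E = [0,inf) x S^1 (functions on S^1 as
  2pi-periodic functions), continuous up to the boundary t = 0.\<close>
definition bounded_harmonic_on_end :: "(real \<times> real \<Rightarrow> 'a::real_inner) \<Rightarrow> (real \<times> real \<Rightarrow> real) \<Rightarrow> bool" where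
  "bounded_harmonic_on_end X u \<longleftrightarrow> harmonic_end X u \<and> continuous_on ({0..} \<times> UNIV) u \<and>
     bounded (u ` ({0..} \<times> UNIV)) \<and> (\<forall>t th. u (t, th + 2 * pi) = u (t, th))"

definition parabolic_end :: "(real \<times> real \<Rightarrow> 'a::real_inner) \<Rightarrow> bool" where
  "parabolic_end X \<longleftrightarrow>
     (\<forall>u v. bounded_harmonic_on_end X u \<and> bounded_harmonic_on_end X v \<and>
        (\<forall>th. u (0, th) = v (0, th)) \<longrightarrow> (\<forall>t\<ge>0. \<forall>th. u (t, th) = v (t, th)))"

end

theory Submission
  imports Defs
begin


lemma core_max:
  fixes h h' k :: "real \<Rightarrow> real"
  assumes d: "0 < d"
    and mx: "\<And>y. \<bar>x - y\<bar> < d \<Longrightarrow> h y \<le> h x"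
    and hd: "\<And>y. \<bar>x - y\<bar> < d \<Longrightarrow> (h has_real_derivative h' y) (at y)"
    and kp: "\<And>y. \<bar>x - y\<bar> < d \<Longrightarrow> k y > 0"
    and G: "((\<lambda>s. k s * h' s) has_real_derivative D) (at x)"
    and Dp: "D > 0"
  shows False
proof -
  have "h' x = 0" using DERIV_local_max[OF hd[of x] d] mx d by auto
  then have G0: "k x * h' x = 0" by simp
  obtain e where e: "e > 0" "\<And>r. r > 0 \<Longrightarrow> r < e \<Longrightarrow> k x * h' x < k (x + r) * h' (x + r)"
    using DERIV_pos_inc_right[OF G Dp] by auto
  define r where "r = min e d / 2"
  have r: "r > 0" "r < e" "r < d" using e d by (auto simp: r_def)
  have pos: "h' y > 0" if "x < y" "y \<le> x + r" for y
  proof -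
    have "0 < k y * h' y" using e(2)[of "y - x"] G0 that r by auto
    moreover have "k y > 0" using kp[of y] that r by auto
    ultimately show ?thesis by (simp add: zero_less_mult_iff)
  qed
  have "h x < h (x + r)"
  proof -
    obtain z where z: "x < z" "z < x + r" "h (x + r) - h x = (x + r - x) * h' z"
      using MVT2[of x "x + r" h h'] r hd pos by (force)
    have "h' z > 0" using pos z by auto
    then have "r * h' z > 0" using r by simp
    then show ?thesis using z by simp
  qed
  moreover have "h (x + r) \<le> h x" using mx[of "x + r"] r by auto
  ultimately show False by simp
qed

definition Lr :: "'a::real_inner \<Rightarrow> 'a \<Rightarrow> real \<Rightarrow> 'a \<Rightarrow> 'a" where
  "Lr f1 f2 th y = ((cos th - 1) * (y \<bullet> f1) - sin th * (y \<bullet> f2)) *\<^sub>R f1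
     + (sin th * (y \<bullet> f1) + (cos th - 1) * (y \<bullet> f2)) *\<^sub>R f2"

lemma rot_Lr: "rot p f1 f2 th x = x + Lr f1 f2 th (x - p)"
  unfolding rot_def Lr_def Let_def by (simp add: algebra_simps)

lemma bl_Lr: "bounded_linear (Lr (f1::'a::euclidean_space) f2 th)"
proof -
  have "linear (Lr f1 f2 th)"
    by (rule linearI) (simp_all add: Lr_def algebra_simps inner_add_left scaleR_add_left)
  then show ?thesis by (simp add: linear_conv_bounded_linear)
qed

lemma part1:
  fixes f :: "real \<times> real \<Rightarrow> real"
  assumes "f differentiable (at (t, th))"
  shows "((\<lambda>s. f (s, th)) has_real_derivative d1 f (t, th)) (at t)"
proof -
  have "(f \<circ> (\<lambda>s. (s, th))) differentiable (at t)"
    by (rule differentiable_chain_at) (auto intro!: derivative_intros simp: assms)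
  then have "(\<lambda>s. f (s, th)) differentiable (at t)" by (simp add: o_def)
  then show ?thesis unfolding d1_def by (simp add: DERIV_deriv_iff_real_differentiable)
qed

lemma part2:
  fixes f :: "real \<times> real \<Rightarrow> real"
  assumes "f differentiable (at (t, th))"
  shows "((\<lambda>s. f (t, s)) has_real_derivative d2 f (t, th)) (at th)"
proof -
  have "(f \<circ> (\<lambda>s. (t, s))) differentiable (at th)"
    by (rule differentiable_chain_at) (auto intro!: derivative_intros simp: assms)
  then have "(\<lambda>s. f (t, s)) differentiable (at th)" by (simp add: o_def)
  then show ?thesis unfolding d2_def by (simp add: DERIV_deriv_iff_real_differentiable)
qed

lemma C2_diff:
  assumes "C2_on ({0<..} \<times> UNIV) u" "t > 0"
  shows "u differentiable (at (t, th))" "d1 u differentiable (at (t, th))"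
    "d2 u differentiable (at (t, th))"
proof -
  have o: "open ({0::real<..} \<times> (UNIV::real set))" by (intro open_Times open_greaterThan open_UNIV)
  have m: "(t, th) \<in> {0<..} \<times> UNIV" using assms by simp
  show "u differentiable (at (t, th))" "d1 u differentiable (at (t, th))"
    "d2 u differentiable (at (t, th))"
    using assms(1) differentiable_on_eq_differentiable_at[OF o] m unfolding C2_on_def by blast+
qed

lemma int_deriv:
  fixes g :: "real \<Rightarrow> real"
  assumes "continuous_on {0..} g" "t > 0"
  shows "((\<lambda>x. integral {0..x} g) has_real_derivative g t) (at t)"
proof -
  have c: "continuous_on {0..t+1} g" using assms(1) by (rule continuous_on_subset) auto
  have tt: "t \<in> {0..t+1}" using assms by simp
  have "((\<lambda>x. integral {0..x} g) has_real_derivative g t) (at t within {0..t+1})"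
    by (rule integral_has_real_derivative[OF c tt])
  moreover have "t \<in> interior {0..t+1}" using assms by simp
  ultimately show ?thesis using at_within_interior[of t "{0..t+1}"] by metis
qed
lemma int_cont:
  fixes g :: "real \<Rightarrow> real"
  assumes "continuous_on {0..} g"
  shows "continuous_on {0..T} (\<lambda>x. integral {0..x} g)"
proof -
  have cg: "continuous_on {0..T} g" using assms by (rule continuous_on_subset) auto
  show ?thesis unfolding continuous_on_eq_continuous_within
  proof
    fix x assume x: "x \<in> {0..T}"
    show "continuous (at x within {0..T}) (\<lambda>x. integral {0..x} g)"
      by (rule DERIV_continuous[OF integral_has_real_derivative[OF cg x]])
  qed
qed

lemma per_nat:
  fixes f :: "real \<Rightarrow> real"
  assumes "\<And>x. f (x + 2*pi) = f x"
  shows "f (x + 2*pi*real n) = f x"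
proof (induction n)
  case 0 then show ?case by simp
next
  case (Suc n)
  have "f (x + 2*pi*real (Suc n)) = f ((x + 2*pi*real n) + 2*pi)" by (simp add: algebra_simps)
  also have "\<dots> = f (x + 2*pi*real n)" by (rule assms)
  finally show ?case using Suc by simp
qed

lemma per_reduce:
  fixes f :: "real \<Rightarrow> real"
  assumes "\<And>x. f (x + 2*pi) = f x"
  shows "\<exists>y \<in> {0..2*pi}. f x = f y"
proof -
  define k where "k = floor (x / (2*pi))"
  define y where "y = x - 2*pi * of_int k"
  have p: "2*pi > 0" by simp
  have k1: "of_int k \<le> x / (2*pi)" "x / (2*pi) < of_int k + 1" unfolding k_def by linarith+
  have "2*pi * of_int k \<le> x" using k1(1) p by (simp add: field_simps)
  moreover have "x < 2*pi*(of_int k + 1)" using k1(2) p by (simp add: field_simps)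
  ultimately have y: "y \<in> {0..2*pi}" unfolding y_def by (simp add: algebra_simps)
  have "f x = f y"
  proof (cases "k \<ge> 0")
    case True
    have "x = y + 2*pi*real (nat k)" unfolding y_def using True by simp
    then show ?thesis using per_nat[of f y "nat k", OF assms] by simp
  next
    case False
    have "y = x + 2*pi*real (nat (-k))" unfolding y_def using False by simp
    then show ?thesis using per_nat[of f x "nat (-k)", OF assms] by simp
  qed
  then show ?thesis using y by blast
qed

lemma deriv_cong_ev:
  fixes f g :: "real \<Rightarrow> real"
  assumes "eventually (\<lambda>s. f s = g s) (nhds x)"
  shows "deriv f x = deriv g x"
proof -
  have "\<And>D. (f has_real_derivative D) (at x) \<longleftrightarrow> (g has_real_derivative D) (at x)"
    using DERIV_cong_ev[OF refl assms refl] by blast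
  then show ?thesis unfolding deriv_def by simp
qed

locale endsetup =
  fixes p f1 f2 :: "'a::euclidean_space" and beta :: "real \<Rightarrow> 'a" and D :: "nat \<Rightarrow> real \<Rightarrow> 'a"
  assumes f11: "f1 \<bullet> f1 = 1" and f22: "f2 \<bullet> f2 = 1" and f12: "f1 \<bullet> f2 = 0"
    and D0: "D 0 = beta"
    and Dd: "\<And>k t. t \<ge> 0 \<Longrightarrow> (D k has_vector_derivative D (Suc k) t) (at t within {0..})"
    and reg: "\<And>t. t \<ge> 0 \<Longrightarrow> D 1 t \<noteq> 0"
    and inflen: "filterlim (\<lambda>T. integral {0..T} (\<lambda>t. norm (D 1 t))) at_top at_top"
    and b0: "\<And>t. t \<ge> 0 \<Longrightarrow> (beta t - p) \<bullet> f2 = 0"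
    and cnz: "\<And>t. t \<ge> 0 \<Longrightarrow> (beta t - p) \<bullet> f1 \<noteq> 0"
begin

definition "c t = (beta t - p) \<bullet> f1"
definition "nb t = norm (D 1 t)"
definition "X = end_imm p f1 f2 beta"

lemma Dat: "t > 0 \<Longrightarrow> (D k has_vector_derivative D (Suc k) t) (at t)"
proof -
  assume t: "t > 0"
  have "(D k has_vector_derivative D (Suc k) t) (at t within {0<..})"
    using Dd[of t k] t by (meson atLeast_iff greaterThan_iff has_vector_derivative_within_subset less_imp_le subsetI)
  then show ?thesis using t has_vector_derivative_within_open[of t "{0<..}"] by auto
qed

lemma beta_at: "t > 0 \<Longrightarrow> (beta has_vector_derivative D 1 t) (at t)"
  using Dat[of t 0] D0 by simp

lemma Dcont: "continuous_on {0..} (D k)"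
  unfolding continuous_on_eq_continuous_within
  using Dd by (auto intro: has_vector_derivative_continuous)

lemma beta_cont: "continuous_on {0..} beta"
  using Dcont[of 0] D0 by simp

lemma Df2: "t > 0 \<Longrightarrow> D 1 t \<bullet> f2 = 0"
proof -
  assume t: "t > 0"
  have d1: "((\<lambda>s. (beta s - p) \<bullet> f2) has_real_derivative D 1 t \<bullet> f2) (at t)"
    unfolding has_real_derivative_iff_has_vector_derivative
    using bounded_linear.has_vector_derivative[OF bounded_linear_inner_left
        has_vector_derivative_diff[OF beta_at[OF t] has_vector_derivative_const]]
    by simp
  have ev: "eventually (\<lambda>s. (beta s - p) \<bullet> f2 = 0) (nhds t)"
    using eventually_nhds_in_open[of "{0<..}" t] t b0
    by (auto elim!: eventually_mono)
  have "((\<lambda>s. (0::real)) has_real_derivative D 1 t \<bullet> f2) (at t)"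
    using DERIV_cong_ev[OF refl ev refl] d1 by simp
  then show ?thesis using DERIV_const DERIV_unique by blast
qed

lemma Xt_eq: "t > 0 \<Longrightarrow> Xt X (t, th) = D 1 t + Lr f1 f2 th (D 1 t)"
proof -
  assume t: "t > 0"
  have "((\<lambda>s. X (s, th)) has_vector_derivative D 1 t + Lr f1 f2 th (D 1 t)) (at t)"
    unfolding X_def end_imm_def rot_Lr split
    using has_vector_derivative_add[OF beta_at[OF t]
       bounded_linear.has_vector_derivative[OF bl_Lr
        has_vector_derivative_diff[OF beta_at[OF t] has_vector_derivative_const]]]
    by simp
  then show ?thesis unfolding Xt_def by (simp add: vector_derivative_at)
qed

lemma Xth_eq: "t \<ge> 0 \<Longrightarrow> Xth X (t, th) = (- sin th * c t) *\<^sub>R f1 + (cos th * c t) *\<^sub>R f2"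
proof -
  assume t: "t \<ge> 0"
  have e: "X (t, s) = beta t + ((cos s - 1) * c t) *\<^sub>R f1 + (sin s * c t) *\<^sub>R f2" for s
    unfolding X_def end_imm_def rot_def Let_def c_def using b0[OF t] by simp
  have "((\<lambda>s. X (t, s)) has_vector_derivative (- sin th * c t) *\<^sub>R f1 + (cos th * c t) *\<^sub>R f2) (at th)"
  proof -
    have d1: "((\<lambda>s. (cos s - 1) * c t) has_real_derivative (- sin th * c t)) (at th)"
      by (auto intro!: derivative_eq_intros)
    have d2: "((\<lambda>s. sin s * c t) has_real_derivative (cos th * c t)) (at th)"
      by (auto intro!: derivative_eq_intros)
    show ?thesis unfolding e
      using has_vector_derivative_add[OF has_vector_derivative_add[OF has_vector_derivative_const
          has_vector_derivative_scaleR[OF d1 has_vector_derivative_const[of f1]]]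
          has_vector_derivative_scaleR[OF d2 has_vector_derivative_const[of f2]]]
      by simp
  qed
  then show ?thesis unfolding Xth_def by (simp add: vector_derivative_at)
qed


lemma metric:
  assumes t: "t > 0"
  shows "g11 X (t, th) = (nb t)\<^sup>2" "g12 X (t, th) = 0" "g22 X (t, th) = (c t)\<^sup>2"
    "gdet X (t, th) = (nb t * c t)\<^sup>2"
proof -
  define V where "V = D 1 t"
  define v where "v = V \<bullet> f1"
  have V2: "V \<bullet> f2 = 0" using Df2[OF t] V_def by simp
  have XT: "Xt X (t, th) = V + ((cos th - 1) * v) *\<^sub>R f1 + (sin th * v) *\<^sub>R f2"
    using Xt_eq[OF t] V2 unfolding V_def v_def Lr_def by simp
  have XH: "Xth X (t, th) = (- sin th * c t) *\<^sub>R f1 + (cos th * c t) *\<^sub>R f2"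
    using Xth_eq t by simp
  have f21: "f2 \<bullet> f1 = 0" using f12 by (simp add: inner_commute)
  have sc: "(sin th)\<^sup>2 + (cos th)\<^sup>2 = 1" by simp
  have VV: "V \<bullet> V = (nb t)\<^sup>2" unfolding nb_def V_def by (simp add: power2_norm_eq_inner)
  show g1: "g11 X (t, th) = (nb t)\<^sup>2"
    unfolding g11_def XT
    apply (simp add: inner_add_left inner_add_right inner_commute[of f1 V] inner_commute[of f2 V]
        V2 f11 f22 f12 f21 VV flip: v_def)
    apply (simp add: algebra_simps power2_eq_square)
    using sc unfolding power2_eq_square by algebra
  show g2: "g12 X (t, th) = 0"
    unfolding g12_def XT XH
    by (simp add: inner_add_left inner_add_right inner_commute[of f1 V] inner_commute[of f2 V]
        V2 f11 f22 f12 f21 flip: v_def) (simp add: algebra_simps V2 f11 f22 f12 f21 flip: v_def)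
  show g3: "g22 X (t, th) = (c t)\<^sup>2"
    unfolding g22_def XH
    apply (simp add: inner_diff_left inner_diff_right inner_add_left inner_add_right f11 f22 f12 f21)
    using sc unfolding power2_eq_square by algebra
  show "gdet X (t, th) = (nb t * c t)\<^sup>2"
    unfolding gdet_def g1 g2 g3 by (simp add: power_mult_distrib)
qed


definition "a t = \<bar>c t\<bar> / nb t"

lemma nbpos: "t \<ge> 0 \<Longrightarrow> nb t > 0" using reg unfolding nb_def by simp
lemma cpos: "t \<ge> 0 \<Longrightarrow> \<bar>c t\<bar> > 0" using cnz unfolding c_def by simp
lemma apos: "t \<ge> 0 \<Longrightarrow> a t > 0" using nbpos cpos unfolding a_def by simp

lemma flux:
  assumes t: "t > 0"
  shows "flux1 X u (t, th) = a t * d1 u (t, th)"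
    "flux2 X u (t, th) = d2 u (t, th) / a t"
    "laplace_beltrami X u (t, th) = (d1 (flux1 X u) (t, th) + d2 (flux2 X u) (t, th)) / (nb t * \<bar>c t\<bar>)"
proof -
  have sq: "sqrt (gdet X (t, th)) = nb t * \<bar>c t\<bar>"
    using metric(4)[OF t] nbpos[of t] t by (simp add: abs_mult)
  have n: "nb t > 0" "\<bar>c t\<bar> > 0" using nbpos cpos t by auto
  show "flux1 X u (t, th) = a t * d1 u (t, th)"
  proof -
    have cc: "(c t)\<^sup>2 = \<bar>c t\<bar> * \<bar>c t\<bar>" by (metis abs_mult_self_eq power2_eq_square)
    show ?thesis unfolding flux1_def sq metric(1-3)[OF t] a_def cc using n
      by (simp add: field_simps)
  qed
  show "flux2 X u (t, th) = d2 u (t, th) / a t"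
    unfolding flux2_def sq metric(1-3)[OF t] a_def using n
    by (simp add: field_simps power2_eq_square)
  show "laplace_beltrami X u (t, th) = (d1 (flux1 X u) (t, th) + d2 (flux2 X u) (t, th)) / (nb t * \<bar>c t\<bar>)"
    unfolding laplace_beltrami_def sq by simp
qed

lemma c_deriv: "t > 0 \<Longrightarrow> (c has_real_derivative D 1 t \<bullet> f1) (at t)"
  unfolding has_real_derivative_iff_has_vector_derivative c_def
  using bounded_linear.has_vector_derivative[OF bounded_linear_inner_left
        has_vector_derivative_diff[OF beta_at has_vector_derivative_const]]
  by simp

lemma a_diff: "t > 0 \<Longrightarrow> a differentiable (at t)"
proof -
  assume t: "t > 0"
  have cd: "c differentiable (at t)" using c_deriv[OF t] real_differentiable_def by blast
  have "(norm \<circ> c) differentiable (at t)"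
    by (rule differentiable_chain_at[OF cd]) (use cnz t in \<open>auto simp: c_def\<close>)
  then have ca: "(\<lambda>s. \<bar>c s\<bar>) differentiable (at t)" by (simp add: o_def)
  have Dd1: "D 1 differentiable (at t)" using Dat[OF t] differentiableI_vector by blast
  have "(norm \<circ> D 1) differentiable (at t)"
    by (rule differentiable_chain_at[OF Dd1]) (use reg t in auto)
  then have nd: "nb differentiable (at t)" unfolding nb_def by (simp add: o_def)
  show ?thesis unfolding a_def[abs_def]
    using differentiable_divide[OF ca nd] nbpos[of t] t by simp
qed


definition "m t = nb t / \<bar>c t\<bar>"
definition "Lam t = integral {0..t} nb"
definition "psi t = integral {0..t} m"

lemma nb_cont: "continuous_on {0..} nb"
  unfolding nb_def[abs_def] using Dcont[of 1] by (intro continuous_on_norm)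

lemma c_cont: "continuous_on {0..} c"
  unfolding c_def[abs_def] using beta_cont by (intro continuous_intros)

lemma m_cont: "continuous_on {0..} m"
  unfolding m_def[abs_def] using nb_cont c_cont cpos
  by (intro continuous_intros) auto

lemma am: "t \<ge> 0 \<Longrightarrow> a t * m t = 1"
  unfolding a_def m_def using nbpos[of t] cpos[of t] by (simp add: field_simps)

lemma m_pos: "t \<ge> 0 \<Longrightarrow> m t > 0"
  unfolding m_def using nbpos cpos by simp

lemma psi_nonneg: "t \<ge> 0 \<Longrightarrow> psi t \<ge> 0"
proof -
  have "m integrable_on {0..t}"
    by (rule integrable_continuous_real, rule continuous_on_subset[OF m_cont]) auto
  moreover have "\<And>x. x \<in> {0..t} \<Longrightarrow> 0 \<le> m x" using m_pos by (simp add: less_imp_le)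
  ultimately show ?thesis unfolding psi_def by (rule integral_nonneg)
qed

lemma Lam_nonneg: "t \<ge> 0 \<Longrightarrow> Lam t \<ge> 0"
proof -
  have "nb integrable_on {0..t}"
    by (rule integrable_continuous_real, rule continuous_on_subset[OF nb_cont]) auto
  moreover have "\<And>x. x \<in> {0..t} \<Longrightarrow> 0 \<le> nb x" using nbpos by (simp add: less_imp_le)
  ultimately show ?thesis unfolding Lam_def by (rule integral_nonneg)
qed

lemma c_le_aux:
  assumes t: "t \<ge> 0" and sg: "\<bar>sg\<bar> = (1::real)"
  shows "sg * c t \<le> sg * c 0 + Lam t"
proof -
  define f where "f x = sg * c 0 + Lam x - sg * c x" for x
  have nf1: "norm f1 = 1" using f11 by (simp add: norm_eq_sqrt_inner)
  have "f 0 \<le> f t"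
  proof (rule DERIV_nonneg_imp_increasing_open[OF t])
    fix x assume x: "0 < x" "x < t"
    have dL: "(Lam has_real_derivative nb x) (at x)"
      unfolding Lam_def[abs_def] by (rule int_deriv[OF nb_cont x(1)])
    have "(f has_real_derivative (0 + nb x - sg * (D 1 x \<bullet> f1))) (at x)"
      unfolding f_def[abs_def]
      by (intro DERIV_diff DERIV_add DERIV_const DERIV_cmult dL c_deriv x(1))
    then have "(f has_real_derivative (nb x - sg * (D 1 x \<bullet> f1))) (at x)" by simp
    moreover have "sg * (D 1 x \<bullet> f1) \<le> nb x"
    proof -
      have "\<bar>D 1 x \<bullet> f1\<bar> \<le> norm (D 1 x) * norm f1" by (rule Cauchy_Schwarz_ineq2)
      then have "\<bar>sg * (D 1 x \<bullet> f1)\<bar> \<le> nb x" using sg nf1 by (simp add: nb_def abs_mult)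
      then show ?thesis by linarith
    qed
    ultimately show "\<exists>y. (f has_real_derivative y) (at x) \<and> 0 \<le> y" by auto
  next
    have LC: "continuous_on {0..t} Lam" unfolding Lam_def[abs_def] by (rule int_cont[OF nb_cont])
    have CC: "continuous_on {0..t} c" by (rule continuous_on_subset[OF c_cont]) auto
    show "continuous_on {0..t} f"
      unfolding f_def[abs_def]
      by (intro continuous_on_diff continuous_on_add continuous_on_const continuous_on_mult LC CC)
  qed
  moreover have "f 0 = 0" unfolding f_def Lam_def by simp
  ultimately show ?thesis unfolding f_def by simp
qed

lemma c_le: "t \<ge> 0 \<Longrightarrow> \<bar>c t\<bar> \<le> \<bar>c 0\<bar> + Lam t"
proof -
  assume t: "t \<ge> 0"
  have "c t \<le> c 0 + Lam t" "- c t \<le> - c 0 + Lam t" using c_le_aux[OF t, of 1] c_le_aux[OF t, of "-1"] by auto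
  moreover have "c 0 \<le> \<bar>c 0\<bar>" "- c 0 \<le> \<bar>c 0\<bar>" by auto
  ultimately show ?thesis unfolding abs_le_iff by linarith
qed

lemma psi_ge:
  assumes t: "t \<ge> 0"
  shows "ln (\<bar>c 0\<bar> + Lam t) - ln \<bar>c 0\<bar> \<le> psi t"
proof -
  define f where "f x = psi x - ln (\<bar>c 0\<bar> + Lam x)" for x
  have c0: "\<bar>c 0\<bar> > 0" using cpos by simp
  have "f 0 \<le> f t"
  proof (rule DERIV_nonneg_imp_increasing_open[OF t])
    fix x assume x: "0 < x" "x < t"
    have L: "\<bar>c 0\<bar> + Lam x > 0" using c0 Lam_nonneg[of x] x by simp
    have dL: "(Lam has_real_derivative nb x) (at x)"
      unfolding Lam_def[abs_def] by (rule int_deriv[OF nb_cont x(1)])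
    have dP: "(psi has_real_derivative m x) (at x)"
      unfolding psi_def[abs_def] by (rule int_deriv[OF m_cont x(1)])
    have dL2: "((\<lambda>x. \<bar>c 0\<bar> + Lam x) has_real_derivative 0 + nb x) (at x)"
      by (intro DERIV_add DERIV_const dL)
    have dln: "((\<lambda>x. ln (\<bar>c 0\<bar> + Lam x)) has_real_derivative inverse (\<bar>c 0\<bar> + Lam x) * (0 + nb x)) (at x)"
      by (rule DERIV_chain2[OF DERIV_ln[OF L] dL2])
    have "(f has_real_derivative (m x - inverse (\<bar>c 0\<bar> + Lam x) * (0 + nb x))) (at x)"
      unfolding f_def[abs_def] by (rule DERIV_diff[OF dP dln])
    then have "(f has_real_derivative (m x - (1 / (\<bar>c 0\<bar> + Lam x)) * nb x)) (at x)"
      by (simp add: inverse_eq_divide)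
    moreover have "(1 / (\<bar>c 0\<bar> + Lam x)) * nb x \<le> m x"
    proof -
      have "\<bar>c x\<bar> \<le> \<bar>c 0\<bar> + Lam x" using c_le x by simp
      moreover have "\<bar>c x\<bar> > 0" "nb x > 0" using cpos nbpos x by auto
      ultimately have "nb x / (\<bar>c 0\<bar> + Lam x) \<le> nb x / \<bar>c x\<bar>"
        by (intro divide_left_mono) auto
      then show ?thesis unfolding m_def by simp
    qed
    ultimately show "\<exists>y. (f has_real_derivative y) (at x) \<and> 0 \<le> y" by auto
  next
    have LC: "continuous_on {0..t} Lam" unfolding Lam_def[abs_def] by (rule int_cont[OF nb_cont])
    have PC: "continuous_on {0..t} psi" unfolding psi_def[abs_def] by (rule int_cont[OF m_cont])
    have "continuous_on {0..t} (\<lambda>x. ln (\<bar>c 0\<bar> + Lam x))"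
    proof (rule continuous_on_ln)
      show "continuous_on {0..t} (\<lambda>x. \<bar>c 0\<bar> + Lam x)" by (intro continuous_on_add continuous_on_const LC)
      show "\<forall>x\<in>{0..t}. \<bar>c 0\<bar> + Lam x \<noteq> 0"
      proof
        fix x assume "x \<in> {0..t}"
        then have "Lam x \<ge> 0" using Lam_nonneg by simp
        then show "\<bar>c 0\<bar> + Lam x \<noteq> 0" using c0 by linarith
      qed
    qed
    then show "continuous_on {0..t} f"
      unfolding f_def[abs_def] by (intro continuous_on_diff PC)
  qed
  moreover have "f 0 = - ln \<bar>c 0\<bar>" unfolding f_def psi_def Lam_def by simp
  ultimately show ?thesis unfolding f_def by simp
qed

lemma psi_unb: "\<exists>T \<ge> t0. psi T > B"
proof -
  have c0: "\<bar>c 0\<bar> > 0" using cpos by simp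
  have fl: "filterlim Lam at_top at_top"
    using inflen unfolding Lam_def[abs_def] nb_def[abs_def] .
  have "eventually (\<lambda>T. exp (B + 1 + ln \<bar>c 0\<bar>) \<le> Lam T) at_top"
    using fl unfolding filterlim_at_top by blast
  then obtain N where N: "\<And>n. n \<ge> N \<Longrightarrow> exp (B + 1 + ln \<bar>c 0\<bar>) \<le> Lam n"
    unfolding eventually_at_top_linorder by blast
  define T where "T = max N (max t0 0)"
  have T: "exp (B + 1 + ln \<bar>c 0\<bar>) \<le> Lam T" "T \<ge> t0" "T \<ge> 0"
    using N[of T] unfolding T_def by auto
  have pos: "0 < \<bar>c 0\<bar> + Lam T" using c0 Lam_nonneg[OF T(3)] by linarith
  have "exp (B + 1 + ln \<bar>c 0\<bar>) \<le> \<bar>c 0\<bar> + Lam T" using T(1) c0 by linarith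
  then have "B + 1 + ln \<bar>c 0\<bar> \<le> ln (\<bar>c 0\<bar> + Lam T)" using ln_ge_iff[OF pos] by blast
  then have "psi T > B" using psi_ge[OF T(3)] by linarith
  then show ?thesis using T by auto
qed

end



context endsetup begin

lemma flux1_deriv:
  assumes hu: "C2_on ({0<..} \<times> UNIV) u" and t: "t > 0"
  shows "((\<lambda>s. a s * d1 u (s, th)) has_real_derivative d1 (flux1 X u) (t, th)) (at t)"
proof -
  have ev: "eventually (\<lambda>s. flux1 X u (s, th) = a s * d1 u (s, th)) (nhds t)"
    using eventually_nhds_in_open[of "{0<..}" t] t flux(1)
    by (auto elim!: eventually_mono)
  have "d1 (flux1 X u) (t, th) = deriv (\<lambda>s. flux1 X u (s, th)) t" by (simp add: d1_def)
  also have "\<dots> = deriv (\<lambda>s. a s * d1 u (s, th)) t" by (rule deriv_cong_ev[OF ev])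
  finally have "d1 (flux1 X u) (t, th) = deriv (\<lambda>s. a s * d1 u (s, th)) t" .
  moreover have "(\<lambda>s. a s * d1 u (s, th)) differentiable (at t)"
  proof (rule differentiable_mult[OF a_diff[OF t]])
    show "(\<lambda>s. d1 u (s, th)) differentiable (at t)"
      using part1[OF C2_diff(2)[OF hu t]] real_differentiable_def by blast
  qed
  ultimately show ?thesis by (simp add: DERIV_deriv_iff_real_differentiable)
qed

lemma flux2_eq:
  assumes hu: "C2_on ({0<..} \<times> UNIV) u" and t: "t > 0"
  shows "d2 (flux2 X u) (t, th) = d2 (d2 u) (t, th) / a t"
proof -
  have e: "(\<lambda>s. flux2 X u (t, s)) = (\<lambda>s. d2 u (t, s) / a t)"
    using flux(2)[OF t] by auto
  have "((\<lambda>s. d2 u (t, s) / a t) has_real_derivative d2 (d2 u) (t, th) / a t) (at th)"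
    by (rule DERIV_cdivide[OF part2[OF C2_diff(3)[OF hu t]]])
  then have "deriv (\<lambda>s. d2 u (t, s) / a t) th = d2 (d2 u) (t, th) / a t" by (rule DERIV_imp_deriv)
  moreover have "d2 (flux2 X u) (t, th) = deriv (\<lambda>s. flux2 X u (t, s)) th" by (simp add: d2_def)
  ultimately show ?thesis unfolding e by simp
qed

lemma lap_eq:
  assumes hu: "harmonic_end X u" and t: "t > 0"
  shows "d1 (flux1 X u) (t, th) = - d2 (d2 u) (t, th) / a t"
proof -
  have C: "C2_on ({0<..} \<times> UNIV) u" using hu unfolding harmonic_end_def by simp
  have "laplace_beltrami X u (t, th) = 0" using hu t unfolding harmonic_end_def by simp
  then have "d1 (flux1 X u) (t, th) + d2 (flux2 X u) (t, th) = 0"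
    using flux(3)[OF t] nbpos[of t] cpos[of t] t by simp
  then show ?thesis using flux2_eq[OF C t] by simp
qed


lemma maxp:
  assumes hu: "bounded_harmonic_on_end X u" and hv: "bounded_harmonic_on_end X v"
    and bd: "\<And>th. u (0, th) = v (0, th)" and ts: "ts > 0"
  shows "u (ts, ths) \<le> v (ts, ths)"
proof (rule ccontr)
  assume "\<not> u (ts, ths) \<le> v (ts, ths)"
  define ws where "ws = u (ts, ths) - v (ts, ths)"
  have wsp: "ws > 0" using \<open>\<not> _\<close> unfolding ws_def by simp
  have Hu: "harmonic_end X u" "continuous_on ({0..} \<times> UNIV) u" "bounded (u ` ({0..} \<times> UNIV))"
    "\<And>t th. u (t, th + 2 * pi) = u (t, th)" using hu unfolding bounded_harmonic_on_end_def by auto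
  have Hv: "harmonic_end X v" "continuous_on ({0..} \<times> UNIV) v" "bounded (v ` ({0..} \<times> UNIV))"
    "\<And>t th. v (t, th + 2 * pi) = v (t, th)" using hv unfolding bounded_harmonic_on_end_def by auto
  have Cu: "C2_on ({0<..} \<times> UNIV) u" using Hu(1) unfolding harmonic_end_def by simp
  have Cv: "C2_on ({0<..} \<times> UNIV) v" using Hv(1) unfolding harmonic_end_def by simp
  obtain Bu where Bu: "\<And>x. x \<in> {0..} \<times> UNIV \<Longrightarrow> \<bar>u x\<bar> \<le> Bu"
    using Hu(3) unfolding bounded_iff by auto
  obtain Bv where Bv: "\<And>x. x \<in> {0..} \<times> UNIV \<Longrightarrow> \<bar>v x\<bar> \<le> Bv"
    using Hv(3) unfolding bounded_iff by auto
  define M where "M = \<bar>Bu\<bar> + \<bar>Bv\<bar> + 1"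
  have Mp: "M > 0" unfolding M_def by simp
  have wM: "\<bar>u (t, th) - v (t, th)\<bar> \<le> M" if "t \<ge> 0" for t th
    using Bu[of "(t, th)"] Bv[of "(t, th)"] that unfolding M_def by auto
  have ps0: "psi ts \<ge> 0" using psi_nonneg ts by simp
  define e where "e = ws / (2 * (psi ts + 1))"
  have ep: "e > 0" unfolding e_def using wsp ps0 by simp
  have eps: "e * psi ts < ws / 2"
  proof -
    have "e * psi ts = ws * psi ts / (2 * (psi ts + 1))" unfolding e_def by simp
    also have "\<dots> < ws * (psi ts + 1) / (2 * (psi ts + 1))"
      using wsp ps0 by (intro divide_strict_right_mono) auto
    also have "\<dots> = ws / 2" using ps0 by (simp add: field_simps)
    finally show ?thesis .
  qed
  obtain T where T: "T \<ge> ts" "psi T > 3 * M / e" using psi_unb by blast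
  have T0: "T > 0" using T ts by simp
  have pT: "psi T > 0" using T(2) Mp ep by (smt (verit) divide_pos_pos)
  have epT: "e * psi T > 3 * M" using T(2) ep by (simp add: field_simps)
  define dl where "dl = M / (psi T * psi T)"
  have dlp: "dl > 0" unfolding dl_def using Mp pT by simp
  have dlT: "dl * (psi T * psi T) = M" unfolding dl_def using pT by simp
  define z where "z q = u q - v q - e * psi (fst q) + dl * (psi (fst q) * psi (fst q))" for q
  define K where "K = {0..T} \<times> {0..2*pi}"
  have PC: "continuous_on {0..T} psi" unfolding psi_def[abs_def] by (rule int_cont[OF m_cont])
  have PCK: "continuous_on K (\<lambda>q. psi (fst q))"
    by (rule continuous_on_compose2[OF PC continuous_on_fst[OF continuous_on_id]]) (auto simp: K_def)
  have KS: "K \<subseteq> {0..} \<times> UNIV" unfolding K_def by auto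
  have zc: "continuous_on K z" unfolding z_def[abs_def]
    by (intro continuous_on_add continuous_on_diff continuous_on_mult continuous_on_const PCK
        continuous_on_subset[OF Hu(2) KS] continuous_on_subset[OF Hv(2) KS])
  have Kc: "compact K" unfolding K_def by (intro compact_Times compact_Icc)
  have Kne: "K \<noteq> {}" unfolding K_def using T0 by auto
  obtain q0 where q0: "q0 \<in> K" "\<And>q. q \<in> K \<Longrightarrow> z q \<le> z q0"
    using continuous_attains_sup[OF Kc Kne zc] by blast
  obtain t0 th0 where q0e: "q0 = (t0, th0)" by (cases q0)
  have zper: "z (t, th + 2*pi) = z (t, th)" for t th unfolding z_def using Hu(4) Hv(4) by simp
  have zmax: "z (t, th) \<le> z (t0, th0)" if "t \<in> {0..T}" for t th
  proof -
    obtain y where y: "y \<in> {0..2*pi}" "z (t, th) = z (t, y)"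
      using per_reduce[of "\<lambda>s. z (t, s)" th] zper by blast
    then show ?thesis using q0(2)[of "(t, y)"] that unfolding q0e K_def by auto
  qed
  have t0I: "t0 \<in> {0..T}" using q0(1) unfolding q0e K_def by auto
  have "z (ts, ths) > 0"
  proof -
    have "z (ts, ths) = ws - e * psi ts + dl * (psi ts * psi ts)" unfolding z_def ws_def by simp
    moreover have "dl * (psi ts * psi ts) \<ge> 0" using dlp by simp
    ultimately show ?thesis using eps wsp by linarith
  qed
  then have zpos: "z (t0, th0) > 0" using zmax[of ts ths] T ts by auto
  have psi0: "psi 0 = 0" unfolding psi_def by simp
  have "t0 \<noteq> 0"
  proof
    assume "t0 = 0"
    then have "z (t0, th0) = 0" unfolding z_def using bd psi0 by simp
    then show False using zpos by simp
  qed
  moreover have "t0 \<noteq> T"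
  proof
    assume "t0 = T"
    then have "z (t0, th0) = (u (T, th0) - v (T, th0)) - e * psi T + dl * (psi T * psi T)"
      unfolding z_def by simp
    also have "\<dots> \<le> M - e * psi T + M" using wM[of T th0] T0 dlT by simp
    finally show False using zpos epT Mp by linarith
  qed
  ultimately have t0p: "0 < t0" "t0 < T" using t0I by auto
  define Q where "Q = d2 (d2 u) (t0, th0) - d2 (d2 v) (t0, th0)"
  have Qle: "Q \<le> 0"
  proof (rule ccontr)
    assume "\<not> Q \<le> 0"
    then have Qp: "Q > 0" by simp
    show False
    proof (rule core_max[of 1 th0 "\<lambda>s. z (t0, s)" "\<lambda>s. d2 u (t0, s) - d2 v (t0, s)" "\<lambda>_. 1" Q])
      show "\<And>y. \<bar>th0 - y\<bar> < 1 \<Longrightarrow> z (t0, y) \<le> z (t0, th0)" using zmax t0I by simp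
      show "((\<lambda>s. z (t0, s)) has_real_derivative d2 u (t0, y) - d2 v (t0, y)) (at y)" for y
      proof -
        have "((\<lambda>s. u (t0, s) - v (t0, s) - e * psi t0 + dl * (psi t0 * psi t0)) has_real_derivative
             d2 u (t0, y) - d2 v (t0, y) - 0 + 0) (at y)"
          by (intro DERIV_add DERIV_diff DERIV_const part2 C2_diff(1)[OF Cu t0p(1)] C2_diff(1)[OF Cv t0p(1)])
        then show ?thesis unfolding z_def by simp
      qed
      have "((\<lambda>s. d2 u (t0, s) - d2 v (t0, s)) has_real_derivative Q) (at th0)"
        unfolding Q_def by (intro DERIV_diff part2 C2_diff(3)[OF Cu t0p(1)] C2_diff(3)[OF Cv t0p(1)])
      then show "((\<lambda>s. 1 * (d2 u (t0, s) - d2 v (t0, s))) has_real_derivative Q) (at th0)" by simp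
    qed (use Qp in auto)
  qed
  define dd where "dd = min t0 (T - t0)"
  have ddp: "dd > 0" unfolding dd_def using t0p by simp
  define h' where "h' s = (d1 u (s, th0) - d1 v (s, th0) - e * m s) + dl * (m s * psi s + m s * psi s)" for s
  show False
  proof (rule core_max[of dd t0 "\<lambda>s. z (s, th0)" h' a
      "d1 (flux1 X u) (t0, th0) - d1 (flux1 X v) (t0, th0) - 0 + 2 * dl * m t0"])
    show "z (y, th0) \<le> z (t0, th0)" if "\<bar>t0 - y\<bar> < dd" for y
    proof -
      have "y \<in> {0..T}" using that unfolding dd_def by (auto simp: abs_less_iff)
      then show ?thesis by (rule zmax)
    qed
    show "((\<lambda>s. z (s, th0)) has_real_derivative h' y) (at y)" if y: "\<bar>t0 - y\<bar> < dd" for y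
    proof -
      have yp: "y > 0" using y unfolding dd_def by auto
      have dP: "(psi has_real_derivative m y) (at y)"
        unfolding psi_def[abs_def] by (rule int_deriv[OF m_cont yp])
      have "((\<lambda>s. u (s, th0) - v (s, th0) - e * psi s + dl * (psi s * psi s)) has_real_derivative h' y) (at y)"
        unfolding h'_def
        by (intro DERIV_add DERIV_diff DERIV_cmult DERIV_mult dP part1 C2_diff(1)[OF Cu yp] C2_diff(1)[OF Cv yp])
      then show ?thesis unfolding z_def by simp
    qed
    show "\<And>y. \<bar>t0 - y\<bar> < dd \<Longrightarrow> a y > 0" using apos unfolding dd_def by auto
    have ev: "eventually (\<lambda>s. a s * h' s = (a s * d1 u (s, th0) - a s * d1 v (s, th0)) - e + 2 * dl * psi s) (nhds t0)"
    proof -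
      have "eventually (\<lambda>s. s \<in> {0::real<..}) (nhds t0)" using t0p by (intro eventually_nhds_in_open) auto
      then show ?thesis
      proof (rule eventually_mono)
        fix s :: real assume "s \<in> {0<..}"
        then have "a s * m s = 1" using am by simp
        then show "a s * h' s = (a s * d1 u (s, th0) - a s * d1 v (s, th0)) - e + 2 * dl * psi s"
          unfolding h'_def by (simp add: algebra_simps)
      qed
    qed
    have dP: "(psi has_real_derivative m t0) (at t0)"
      unfolding psi_def[abs_def] by (rule int_deriv[OF m_cont t0p(1)])
    have "((\<lambda>s. (a s * d1 u (s, th0) - a s * d1 v (s, th0)) - e + 2 * dl * psi s) has_real_derivative
        d1 (flux1 X u) (t0, th0) - d1 (flux1 X v) (t0, th0) - 0 + 2 * dl * m t0) (at t0)"
      by (intro DERIV_add DERIV_diff DERIV_const DERIV_cmult dP flux1_deriv[OF Cu t0p(1)] flux1_deriv[OF Cv t0p(1)])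
    then show "((\<lambda>s. a s * h' s) has_real_derivative
        d1 (flux1 X u) (t0, th0) - d1 (flux1 X v) (t0, th0) - 0 + 2 * dl * m t0) (at t0)"
      using DERIV_cong_ev[OF refl ev refl] by blast
    have "d1 (flux1 X u) (t0, th0) - d1 (flux1 X v) (t0, th0) = - Q / a t0"
      unfolding Q_def lap_eq[OF Hu(1) t0p(1)] lap_eq[OF Hv(1) t0p(1)] by (simp add: diff_divide_distrib)
    moreover have "- Q / a t0 \<ge> 0" using Qle apos[of t0] t0p by (simp add: divide_nonpos_pos)
    moreover have "2 * dl * m t0 > 0" using dlp m_pos[of t0] t0p by simp
    ultimately show "d1 (flux1 X u) (t0, th0) - d1 (flux1 X v) (t0, th0) - 0 + 2 * dl * m t0 > 0"
      by linarith
  qed (rule ddp)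
qed

end

lemma at_Ici_nbot: "(t::real) \<ge> 0 \<Longrightarrow> at t within {0..} \<noteq> bot"
proof -
  assume t: "t \<ge> 0"
  have "t islimpt {t<..<t+1}" by (rule islimpt_greaterThanLessThan1) simp
  then have "t islimpt {0..}" by (rule islimpt_subset) (use t in auto)
  then show ?thesis using trivial_limit_within by blast
qed

lemma span3:
  fixes e1 e2 f1 :: "'a::real_vector"
  assumes "x \<in> span {e1, e2, f1}"
  shows "\<exists>k1 k2 c. x = k1 *\<^sub>R e1 + k2 *\<^sub>R e2 + c *\<^sub>R f1"
proof -
  obtain k1 where "x - k1 *\<^sub>R e1 \<in> span {e2, f1}" using assms span_insert[of e1 "{e2, f1}"] by auto
  then obtain k2 where "x - k1 *\<^sub>R e1 - k2 *\<^sub>R e2 \<in> span {f1}" using span_insert[of e2 "{f1}"] by auto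
  then obtain c where "x - k1 *\<^sub>R e1 - k2 *\<^sub>R e2 = c *\<^sub>R f1" using span_singleton[of f1] by auto
  then have "x = k1 *\<^sub>R e1 + k2 *\<^sub>R e2 + c *\<^sub>R f1" by (simp add: algebra_simps)
  then show ?thesis by blast
qed

context endsetup begin
lemma parab: "parabolic_end (end_imm p f1 f2 beta)"
  unfolding parabolic_end_def X_def[symmetric]
proof (intro allI impI)
  fix u v :: "real \<times> real \<Rightarrow> real" and t th :: real
  assume H: "bounded_harmonic_on_end X u \<and> bounded_harmonic_on_end X v \<and> (\<forall>th. u (0, th) = v (0, th))"
    and t: "0 \<le> t"
  show "u (t, th) = v (t, th)"
  proof (cases "t = 0")
    case True then show ?thesis using H by simp
  next
    case False
    then have tp: "t > 0" using t by simp
    have "u (t, th) \<le> v (t, th)" using maxp[of u v t th] H tp by auto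
    moreover have "v (t, th) \<le> u (t, th)" using maxp[of v u t th] H tp by auto
    ultimately show ?thesis by simp
  qed
qed
end

lemma end_parabolic:
  fixes p f1 f2 :: "'a::euclidean_space" and beta :: "real \<Rightarrow> 'a"
  assumes "norm f1 = 1" "norm f2 = 1" "f1 \<bullet> f2 = 0"
    and sm: "smooth_curve beta" and rg: "regular_curve beta" and il: "infinite_length beta"
    and b0: "\<And>t. t \<ge> 0 \<Longrightarrow> (beta t - p) \<bullet> f2 = 0"
    and cnz: "\<And>t. t \<ge> 0 \<Longrightarrow> (beta t - p) \<bullet> f1 \<noteq> 0"
  shows "parabolic_end (end_imm p f1 f2 beta)"
proof -
  obtain D where D0: "D 0 = beta" and Dd: "\<And>k t. t \<ge> 0 \<Longrightarrow> (D k has_vector_derivative D (Suc k) t) (at t within {0..})"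
    using sm unfolding smooth_curve_def by blast
  have vd: "vector_derivative beta (at t within {0..}) = D 1 t" if "t \<ge> 0" for t
    using vector_derivative_within[OF at_Ici_nbot[OF that] Dd[OF that, of 0]] D0 by simp
  have reg: "D 1 t \<noteq> 0" if "t \<ge> 0" for t
    using rg that vd unfolding regular_curve_def by metis
  have ie: "integral {0..T} (\<lambda>t. norm (vector_derivative beta (at t within {0..}))) = integral {0..T} (\<lambda>t. norm (D 1 t))" for T
    by (rule integral_cong) (simp add: vd)
  have inf: "filterlim (\<lambda>T. integral {0..T} (\<lambda>t. norm (D 1 t))) at_top at_top"
    using il unfolding infinite_length_def ie .
  interpret endsetup p f1 f2 beta D
    by unfold_locales (use assms D0 Dd reg inf in \<open>auto simp: norm_eq_1\<close>)
  show ?thesis by (rule parab)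
qed

theorem theoremA:
  shows "(\<forall>(p::real^3) (e::real^3) (f1::real^3) (f2::real^3) (beta::real \<Rightarrow> real^3).
            norm e = 1 \<and> norm f1 = 1 \<and> norm f2 = 1 \<and>
            e \<bullet> f1 = 0 \<and> e \<bullet> f2 = 0 \<and> f1 \<bullet> f2 = 0 \<and>
            smooth_curve beta \<and> regular_curve beta \<and> infinite_length beta \<and>
            (\<forall>t\<ge>0. beta t \<in> {p + s *\<^sub>R e + r *\<^sub>R f1 | s r. True}) \<and>
            (\<forall>t\<ge>0. beta t \<notin> {p + s *\<^sub>R e | s. True})
            \<longrightarrow> parabolic_end (end_imm p f1 f2 beta))
       \<and>
         (\<forall>(e1::real^4) (e2::real^4) (f1::real^4) (f2::real^4) (beta::real \<Rightarrow> real^4).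
            norm e1 = 1 \<and> norm e2 = 1 \<and> norm f1 = 1 \<and> norm f2 = 1 \<and>
            e1 \<bullet> e2 = 0 \<and> e1 \<bullet> f1 = 0 \<and> e1 \<bullet> f2 = 0 \<and>
            e2 \<bullet> f1 = 0 \<and> e2 \<bullet> f2 = 0 \<and> f1 \<bullet> f2 = 0 \<and>
            smooth_curve beta \<and> regular_curve beta \<and> infinite_length beta \<and>
            (\<forall>t\<ge>0. norm (beta t) = 1 \<and> beta t \<in> span {e1, e2, f1} \<and> beta t \<notin> span {e1, e2})
            \<longrightarrow> parabolic_end (end_imm 0 f1 f2 beta))"
proof (intro conjI allI impI)
  fix p e f1 f2 :: "real^3" and beta :: "real \<Rightarrow> real^3"
  assume H: "norm e = 1 \<and> norm f1 = 1 \<and> norm f2 = 1 \<and>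
            e \<bullet> f1 = 0 \<and> e \<bullet> f2 = 0 \<and> f1 \<bullet> f2 = 0 \<and>
            smooth_curve beta \<and> regular_curve beta \<and> infinite_length beta \<and>
            (\<forall>t\<ge>0. beta t \<in> {p + s *\<^sub>R e + r *\<^sub>R f1 | s r. True}) \<and>
            (\<forall>t\<ge>0. beta t \<notin> {p + s *\<^sub>R e | s. True})"
  have f11: "f1 \<bullet> f1 = 1" using H by (simp add: norm_eq_1)
  have ef: "e \<bullet> f1 = 0" "e \<bullet> f2 = 0" "f1 \<bullet> f2 = 0" using H by auto
  have geo: "(beta t - p) \<bullet> f2 = 0 \<and> (beta t - p) \<bullet> f1 \<noteq> 0" if t: "t \<ge> 0" for t
  proof -
    obtain s r where sr: "beta t = p + s *\<^sub>R e + r *\<^sub>R f1" using H t by blast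
    have "(beta t - p) \<bullet> f2 = 0" unfolding sr using ef by (simp add: inner_add_left)
    moreover have "(beta t - p) \<bullet> f1 = r" unfolding sr using ef f11 by (simp add: inner_add_left)
    moreover have "r \<noteq> 0"
    proof
      assume "r = 0"
      then have "beta t \<in> {p + s *\<^sub>R e | s. True}" using sr by auto
      then show False using H t by blast
    qed
    ultimately show ?thesis by simp
  qed
  show "parabolic_end (end_imm p f1 f2 beta)"
    by (rule end_parabolic) (use H geo in auto)
next
  fix e1 e2 f1 f2 :: "real^4" and beta :: "real \<Rightarrow> real^4"
  assume H: "norm e1 = 1 \<and> norm e2 = 1 \<and> norm f1 = 1 \<and> norm f2 = 1 \<and>
            e1 \<bullet> e2 = 0 \<and> e1 \<bullet> f1 = 0 \<and> e1 \<bullet> f2 = 0 \<and>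
            e2 \<bullet> f1 = 0 \<and> e2 \<bullet> f2 = 0 \<and> f1 \<bullet> f2 = 0 \<and>
            smooth_curve beta \<and> regular_curve beta \<and> infinite_length beta \<and>
            (\<forall>t\<ge>0. norm (beta t) = 1 \<and> beta t \<in> span {e1, e2, f1} \<and> beta t \<notin> span {e1, e2})"
  have f11: "f1 \<bullet> f1 = 1" using H by (simp add: norm_eq_1)
  have ef: "e1 \<bullet> f1 = 0" "e1 \<bullet> f2 = 0" "e2 \<bullet> f1 = 0" "e2 \<bullet> f2 = 0" "f1 \<bullet> f2 = 0" using H by auto
  have geo: "(beta t - 0) \<bullet> f2 = 0 \<and> (beta t - 0) \<bullet> f1 \<noteq> 0" if t: "t \<ge> 0" for t
  proof -
    obtain k1 k2 c where sr: "beta t = k1 *\<^sub>R e1 + k2 *\<^sub>R e2 + c *\<^sub>R f1"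
      using span3[of "beta t" e1 e2 f1] H t by blast
    have "beta t \<bullet> f2 = 0" unfolding sr using ef by (simp add: inner_add_left)
    moreover have "beta t \<bullet> f1 = c" unfolding sr using ef f11 by (simp add: inner_add_left)
    moreover have "c \<noteq> 0"
    proof
      assume "c = 0"
      then have "beta t = k1 *\<^sub>R e1 + k2 *\<^sub>R e2" using sr by simp
      moreover have "k1 *\<^sub>R e1 + k2 *\<^sub>R e2 \<in> span {e1, e2}"
        by (intro span_add span_mul span_base) auto
      ultimately show False using H t by auto
    qed
    ultimately show ?thesis by simp
  qed
  show "parabolic_end (end_imm 0 f1 f2 beta)"
    by (rule end_parabolic) (use H geo in auto)
qed
end
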